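(* Let $q=2^t$. Then $\dim(\ker\pi_{P_1}\cap C(P,L))=q+1$.
   Context: Let $q$ be a prime power and $V$ a $4$-dimensional vector space over $\mathbb{F}_q$ with a nonsingular alternating bilinear form and symplectic basis $e_0,e_1,e_2,e_3$ with $(e_0,e_3)=(e_1,e_2)=1$. $P$ is the set of $1$-dimensional subspaces of $V$ (points), $L$ the set of totally isotropic $2$-dimensional subspaces (lines). $p_0=\langle e_0\rangle$; $P_1$ is the set of points $(a:b:c:d)$ with $d\ne 0$ (the points not collinear with $p_0$). $\mathbb{F}_2[P]$ is the space of functions $P\to\mathbb{F}_2$, and $C(P,L)$ is the span of the characteristic functions $\chi_\ell$ of all lines $\ell\in L$. $\pi_{P_1}:\mathbb{F}_2[P]\to\mathbb{F}_2[P_1]$ is restriction of functions to $P_1$. *)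

theory Defs
  imports Complex_Main "HOL-Library.Z2" "HOL-Library.Function_Algebras"
begin

text \<open>V = F_q^4, vectors written as coordinate tuples (a,b,c,d) = a e0 + b e1 + c e2 + d e3.\<close>

type_synonym 'a vec4 = "'a \<times> 'a \<times> 'a \<times> 'a"

definition v4_add :: "'a::field vec4 \<Rightarrow> 'a vec4 \<Rightarrow> 'a vec4" where
  "v4_add u w = (case u of (a0,a1,a2,a3) \<Rightarrow> case w of (b0,b1,b2,b3) \<Rightarrow>
                   (a0+b0, a1+b1, a2+b2, a3+b3))"

definition v4_smult :: "'a::field \<Rightarrow> 'a vec4 \<Rightarrow> 'a vec4" where
  "v4_smult c u = (case u of (a0,a1,a2,a3) \<Rightarrow> (c*a0, c*a1, c*a2, c*a3))"

definition sform :: "'a::field vec4 \<Rightarrow> 'a vec4 \<Rightarrow> 'a" where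
  "sform u w = (case u of (a0,a1,a2,a3) \<Rightarrow> case w of (b0,b1,b2,b3) \<Rightarrow>
                  a0*b3 - a3*b0 + a1*b2 - a2*b1)"

definition span1 :: "'a::field vec4 \<Rightarrow> 'a vec4 set" where
  "span1 v = {v4_smult c v | c. True}"

definition span2 :: "'a::field vec4 \<Rightarrow> 'a vec4 \<Rightarrow> 'a vec4 set" where
  "span2 u w = {v4_add (v4_smult a u) (v4_smult b w) | a b. True}"

definition lin_indep2 :: "'a::field vec4 \<Rightarrow> 'a vec4 \<Rightarrow> bool" where
  "lin_indep2 u w = (\<forall>a b. v4_add (v4_smult a u) (v4_smult b w) = (0,0,0,0) \<longrightarrow> a = 0 \<and> b = 0)"

definition Points :: "'a::field vec4 set set" where
  "Points = {span1 v | v. v \<noteq> (0,0,0,0)}"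

definition Lines :: "'a::field vec4 set set" where
  "Lines = {W. \<exists>u w. lin_indep2 u w \<and> W = span2 u w \<and> (\<forall>x\<in>W. \<forall>y\<in>W. sform x y = 0)}"

definition Points1 :: "'a::field vec4 set set" where
  "Points1 = {p \<in> Points. \<exists>a b c d. d \<noteq> 0 \<and> p = span1 (a,b,c,d)}"

text \<open>F_2[P] is modelled as functions on point-sets with values in bit (= F_2);
  characteristic functions vanish outside P.\<close>
definition chi :: "'a::field vec4 set \<Rightarrow> 'a vec4 set \<Rightarrow> bit" where
  "chi l = (\<lambda>p. if p \<in> Points \<and> p \<subseteq> l then 1 else 0)"

definition fscale :: "bit \<Rightarrow> ('x \<Rightarrow> bit) \<Rightarrow> ('x \<Rightarrow> bit)" where
  "fscale c f = (\<lambda>x. c * f x)"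

definition code_PL :: "('a::field vec4 set \<Rightarrow> bit) set" where
  "code_PL = module.span fscale (chi ` (Lines :: 'a vec4 set set))"

definition ker_restr_P1 :: "('a::field vec4 set \<Rightarrow> bit) set" where
  "ker_restr_P1 = {f. \<forall>p \<in> (Points1 :: 'a vec4 set set). f p = 0}"

end

theory Submission imports Defs "HOL-Library.Cardinality" begin


lemma v4_add_simp[simp]: "v4_add (a0,a1,a2,a3) (b0,b1,b2,b3) = (a0+b0,a1+b1,a2+b2,a3+b3)"
  by (simp add: v4_add_def)
lemma v4_smult_simp[simp]: "v4_smult c (a0,a1,a2,a3) = (c*a0,c*a1,c*a2,c*a3)"
  by (simp add: v4_smult_def)
lemma sform_simp[simp]: "sform (a0,a1,a2,a3) (b0,b1,b2,b3) = a0*b3 - a3*b0 + a1*b2 - a2*b1"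
  by (simp add: sform_def)

lemma span2_mem: "x \<in> span2 u w \<longleftrightarrow> (\<exists>a b. x = v4_add (v4_smult a u) (v4_smult b w))"
  by (auto simp: span2_def)

lemma span2_smult: "x \<in> span2 u w \<Longrightarrow> v4_smult (c::'a::field) x \<in> span2 u w"
  apply (cases u rule: prod_cases4; cases w rule: prod_cases4)
  apply (auto simp: span2_mem)
  subgoal for u0 u1 u2 u3 w0 w1 w2 w3 a b
    by (rule exI[of _ "c*a"], rule exI[of _ "c*b"]) (simp add: algebra_simps)
  done

lemma span2_add: "x \<in> span2 u w \<Longrightarrow> y \<in> span2 u w \<Longrightarrow> v4_add x (y::'a::field vec4) \<in> span2 u w"
  apply (cases u rule: prod_cases4; cases w rule: prod_cases4)
  apply (auto simp: span2_mem)
  subgoal for u0 u1 u2 u3 w0 w1 w2 w3 a b a' b'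
    by (rule exI[of _ "a+b"], rule exI[of _ "a'+b'"]) (simp add: algebra_simps)
  done

lemma span2_zero: "(0,0,0,0) \<in> span2 u (w::'a::field vec4)"
  apply (cases u rule: prod_cases4; cases w rule: prod_cases4)
  by (auto simp: span2_mem intro!: exI[of _ 0])

lemma mem_span1: "v \<in> span1 (v::'a::field vec4)"
  apply (cases v rule: prod_cases4)
  by (auto simp: span1_def intro!: exI[of _ 1])

lemma span1_sub_span2: "span1 v \<subseteq> span2 u w \<longleftrightarrow> v \<in> span2 u (w::'a::field vec4)"
  using mem_span1[of v] span2_smult[of v u w] by (auto simp: span1_def)

lemma span1_Points: "v \<noteq> (0,0,0,0) \<Longrightarrow> span1 v \<in> Points"
  unfolding Points_def by blast

lemma chi_span2: "v \<noteq> (0,0,0,0) \<Longrightarrow> chi (span2 u w) (span1 v) = (if v \<in> span2 u (w::'a::field vec4) then 1 else 0)"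
  by (simp add: chi_def span1_Points span1_sub_span2)

lemma span1_scale: "(s::'a::field) \<noteq> 0 \<Longrightarrow> span1 (v4_smult s v) = span1 v"
  apply (cases v rule: prod_cases4)
  apply (auto simp: span1_def)
  subgoal for v0 v1 v2 v3 c by (rule exI[of _ "c/s"]) (simp add: field_simps)
  done

lemma sform_lin1: "sform (v4_add (v4_smult a u) (v4_smult b w)) c = a * sform u c + b * sform w (c::'a::field vec4)"
  apply (cases u rule: prod_cases4; cases w rule: prod_cases4; cases c rule: prod_cases4)
  by (simp add: algebra_simps)

lemma sform_lin2: "sform c (v4_add (v4_smult a u) (v4_smult b w)) = a * sform c u + b * sform c (w::'a::field vec4)"
  apply (cases u rule: prod_cases4; cases w rule: prod_cases4; cases c rule: prod_cases4)
  by (simp add: algebra_simps)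

lemma sform_alt: "sform u (u::'a::field vec4) = 0"
  by (cases u rule: prod_cases4) (simp add: algebra_simps)

lemma sform_skew: "sform u w = - sform w (u::'a::field vec4)"
  apply (cases u rule: prod_cases4; cases w rule: prod_cases4)
  by (simp add: algebra_simps)

lemma kernel_elt:
  assumes "lin_indep2 u w"
  shows "\<exists>z\<in>span2 u w. z \<noteq> (0,0,0,0) \<and> sform z c = (0::'a::field)"
proof (cases "sform u c = 0 \<and> sform w c = 0")
  case True
  have "u \<noteq> (0,0,0,0)"
  proof
    assume "u = (0,0,0,0)"
    have "v4_add (v4_smult 1 u) (v4_smult 0 w) = (0,0,0,0) \<longrightarrow> (1::'a) = 0 \<and> (0::'a) = 0"
      using assms unfolding lin_indep2_def by blast
    with \<open>u = (0,0,0,0)\<close> have "(1::'a) = 0"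
      by (cases w rule: prod_cases4) simp
    thus False by simp
  qed
  moreover have "u \<in> span2 u w"
    unfolding span2_mem by (rule exI[of _ 1], rule exI[of _ 0], cases u rule: prod_cases4, cases w rule: prod_cases4) simp
  ultimately show ?thesis using True by blast
next
  case False
  define z where "z = v4_add (v4_smult (sform w c) u) (v4_smult (- sform u c) w)"
  have "z \<in> span2 u w" unfolding z_def span2_mem by blast
  moreover have "z \<noteq> (0,0,0,0)" using assms False unfolding z_def lin_indep2_def by (metis neg_equal_0_iff_equal)
  moreover have "sform z c = 0" unfolding z_def sform_lin1 by (simp add: algebra_simps)
  ultimately show ?thesis by blast
qed



lemma involution_even:
  assumes "finite S" "\<forall>x\<in>S. \<sigma> x \<in> S \<and> \<sigma> x \<noteq> x \<and> \<sigma> (\<sigma> x) = x"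
  shows "even (card S)"
  using assms
proof (induction "card S" arbitrary: S rule: less_induct)
  case less
  show ?case
  proof (cases "S = {}")
    case True then show ?thesis by simp
  next
    case False
    then obtain x where x: "x \<in> S" by blast
    define S' where "S' = S - {x, \<sigma> x}"
    have sx: "\<sigma> x \<in> S" "\<sigma> x \<noteq> x" using less.prems x by auto
    have c: "card S = card S' + 2"
    proof -
      have "card S' = card S - card {x, \<sigma> x}" unfolding S'_def
        using less.prems(1) x sx by (subst card_Diff_subset) auto
      moreover have "card {x, \<sigma> x} = 2" using sx by simp
      moreover have "card S \<ge> card {x, \<sigma> x}" using less.prems(1) x sx by (intro card_mono) auto
      ultimately show ?thesis by linarith
    qed
    have "even (card S')"
    proof (rule less.hyps)
      show "card S' < card S" using c by simp
      show "finite S'" using less.prems(1) S'_def by simp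
      show "\<forall>y\<in>S'. \<sigma> y \<in> S' \<and> \<sigma> y \<noteq> y \<and> \<sigma> (\<sigma> y) = y"
      proof
        fix y assume y: "y \<in> S'"
        then have y': "y \<in> S" "y \<noteq> x" "y \<noteq> \<sigma> x" unfolding S'_def by auto
        have h: "\<sigma> y \<in> S" "\<sigma> y \<noteq> y" "\<sigma> (\<sigma> y) = y" using less.prems(2) y'(1) by auto
        have "\<sigma> y \<noteq> x" using h(3) y'(3) by auto
        moreover have "\<sigma> y \<noteq> \<sigma> x" using h(3) y'(2) less.prems(2) x by metis
        ultimately show "\<sigma> y \<in> S' \<and> \<sigma> y \<noteq> y \<and> \<sigma> (\<sigma> y) = y" using h unfolding S'_def by auto
      qed
    qed
    then show ?thesis using c by simp
  qed
qed

lemma char2: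
  assumes "card (UNIV :: 'a::{field,finite} set) = 2 ^ t"
  shows "(1::'a) + 1 = 0"
proof (rule ccontr)
  assume ne: "(1::'a) + 1 \<noteq> 0"
  have "even (card (UNIV - {0::'a}))"
  proof (rule involution_even[where \<sigma> = uminus])
    show "\<forall>x\<in>UNIV - {0::'a}. - x \<in> UNIV - {0} \<and> - x \<noteq> x \<and> - (- x) = x"
    proof
      fix x :: 'a assume x: "x \<in> UNIV - {0}"
      have "- x \<noteq> x"
      proof
        assume "- x = x"
        then have "(1 + 1) * x = 0" by (simp add: algebra_simps)
        with ne x show False by simp
      qed
      then show "- x \<in> UNIV - {0} \<and> - x \<noteq> x \<and> - (- x) = x" using x by auto
    qed
  qed simp
  moreover have "card (UNIV - {0::'a}) = 2 ^ t - 1" using assms by (simp add: card_Diff_subset)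
  moreover have "t \<noteq> 0"
  proof
    assume "t = 0"
    then have "card (UNIV :: 'a set) = 1" using assms by simp
    then obtain z where "(UNIV :: 'a set) = {z}" using card_1_singletonE by blast
    then have "(0::'a) = 1" by (metis UNIV_I singletonD)
    then show False by simp
  qed
  ultimately show False by simp
qed

lemma card_q_facts:
  assumes "card (UNIV :: 'a::{field,finite} set) = 2 ^ t"
  shows "even (card (UNIV :: 'a set))" "odd (card (UNIV :: 'a set) - 1)"
proof -
  have "t \<noteq> 0"
  proof
    assume "t = 0"
    then have "card (UNIV :: 'a set) = 1" using assms by simp
    then obtain z where "(UNIV :: 'a set) = {z}" using card_1_singletonE by blast
    then have "(0::'a) = 1" by (metis UNIV_I singletonD)
    then show False by simp
  qed
  then show "even (card (UNIV :: 'a set))" using assms by simp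
  then show "odd (card (UNIV :: 'a set) - 1)" using assms by simp
qed

lemma of_nat_bit: "(of_nat n :: bit) = (if even n then 0 else 1)"
  by (induction n) auto

lemma translate_even:
  assumes "(1::'a::field) + 1 = 0" "finite W" "z \<noteq> (0,0,0,0)" "\<forall>v\<in>W. v4_add v z \<in> W"
  shows "even (card (W :: 'a vec4 set))"
proof (rule involution_even[where \<sigma> = "\<lambda>v. v4_add v z"])
  have zz: "x + x = 0" for x :: 'a
    using assms(1) by (metis distrib_left mult_1_right mult_zero_right)
  show "\<forall>x\<in>W. v4_add x z \<in> W \<and> v4_add x z \<noteq> x \<and> v4_add (v4_add x z) z = x"
  proof (intro ballI conjI)
    fix x assume "x \<in> W"
    then show "v4_add x z \<in> W" using assms(4) by blast
    show "v4_add x z \<noteq> x" using assms(3)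
      by (cases x rule: prod_cases4; cases z rule: prod_cases4) auto
    show "v4_add (v4_add x z) z = x"
      by (cases x rule: prod_cases4; cases z rule: prod_cases4) (simp add: add.assoc zz)
  qed
qed (use assms in auto)

lemma fscale_vs: "vector_space (fscale :: bit \<Rightarrow> ('x \<Rightarrow> bit) \<Rightarrow> ('x \<Rightarrow> bit))"
  by unfold_locales (simp_all only: fscale_def plus_fun_def distrib_left distrib_right mult.assoc mult_1_left)

lemma fscale_mod: "module (fscale :: bit \<Rightarrow> ('x \<Rightarrow> bit) \<Rightarrow> ('x \<Rightarrow> bit))"
  by unfold_locales (simp_all only: fscale_def plus_fun_def distrib_left distrib_right mult.assoc mult_1_left)

lemma sum_fun_apply: "(sum F A) x = sum (\<lambda>a. F a x) A"
  by (induction A rule: infinite_finite_induct) auto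

definition dsum :: "('a::{field,finite} vec4 \<Rightarrow> bool) \<Rightarrow> ('a vec4 set \<Rightarrow> bit) \<Rightarrow> bit" where
  "dsum G f = (\<Sum>v\<in>{v. v \<noteq> (0,0,0,0) \<and> G v}. f (span1 v))"

lemma dual:
  assumes G: "\<forall>l\<in>(Lines :: 'a::{field,finite} vec4 set set). even (card {v. v \<in> l \<and> v \<noteq> (0,0,0,0) \<and> G v})"
    and f: "f \<in> code_PL"
  shows "dsum G f = 0"
proof -
  have "f \<in> module.span fscale (chi ` (Lines :: 'a vec4 set set))" using f by (simp add: code_PL_def)
  then show ?thesis
  proof (rule module.span_induct_alt[OF fscale_mod])
    show "dsum G 0 = 0" by (simp add: dsum_def)
  next
    fix c x y assume step: "x \<in> chi ` (Lines :: 'a vec4 set set)" "dsum G y = 0"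
    then obtain l where l: "l \<in> Lines" "x = chi l" by blast
    then obtain u w where uw: "l = span2 u w" unfolding Lines_def by blast
    have "dsum G x = (\<Sum>v\<in>{v. v \<noteq> (0,0,0,0) \<and> G v}. if v \<in> l then 1 else 0)"
      unfolding dsum_def l(2) uw by (intro sum.cong refl) (simp add: chi_span2)
    also have "\<dots> = of_nat (card {v. v \<in> l \<and> v \<noteq> (0,0,0,0) \<and> G v})"
      by (simp add: sum.If_cases Int_def conj_commute conj_left_commute)
    also have "\<dots> = 0" using G l(1) by (simp add: of_nat_bit)
    finally have x0: "dsum G x = 0" .
    have "dsum G (fscale c x + y) = c * dsum G x + dsum G y"
      unfolding dsum_def fscale_def plus_fun_def by (simp only: sum.distrib sum_distrib_left)
    then show "dsum G (fscale c x + y) = 0" using x0 step by simp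
  qed
qed



lemma sform_e3: "sform v (0,0,0,1) = fst (v::'a::field vec4)"
  by (cases v rule: prod_cases4) simp

lemma sform_add1: "sform (v4_add x y) c = sform x c + sform y (c::'a::field vec4)"
  by (cases x rule: prod_cases4; cases y rule: prod_cases4; cases c rule: prod_cases4) (simp add: algebra_simps)
lemma sform_zero1: "sform (0,0,0,0) (c::'a::field vec4) = 0"
  by (cases c rule: prod_cases4) simp

lemma G1_even:
  assumes ch: "(1::'a::{field,finite}) + 1 = 0" and l: "l \<in> (Lines :: 'a vec4 set set)"
  shows "even (card {v. v \<in> l \<and> v \<noteq> (0,0,0,0) \<and> fst v \<noteq> 0})"
proof -
  obtain u w where uw: "lin_indep2 u w" "l = span2 u w" using l unfolding Lines_def by blast
  obtain z where z: "z \<in> l" "z \<noteq> (0,0,0,0)" "fst z = 0"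
    using kernel_elt[OF uw(1), of "(0,0,0,1)"] uw(2) sform_e3 by metis
  show ?thesis
  proof (rule translate_even[OF ch _ z(2)])
    show "\<forall>v\<in>{v. v \<in> l \<and> v \<noteq> (0,0,0,0) \<and> fst v \<noteq> 0}. v4_add v z \<in> {v. v \<in> l \<and> v \<noteq> (0,0,0,0) \<and> fst v \<noteq> 0}"
    proof
      fix v assume v: "v \<in> {v. v \<in> l \<and> v \<noteq> (0,0,0,0) \<and> fst v \<noteq> 0}"
      have "v4_add v z \<in> l" using v z(1) uw(2) span2_add by blast
      moreover have "fst (v4_add v z) = fst v" using z(3)
        by (cases v rule: prod_cases4; cases z rule: prod_cases4) simp
      ultimately show "v4_add v z \<in> {v. v \<in> l \<and> v \<noteq> (0,0,0,0) \<and> fst v \<noteq> 0}" using v by auto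
    qed
  qed simp
qed

lemma sub_parity:
  assumes ch: "(1::'a::{field,finite}) + 1 = 0" and W0: "(0,0,0,0) \<in> W"
    and cl: "\<forall>x\<in>W. \<forall>y\<in>W. v4_add x y \<in> (W :: 'a vec4 set)"
    and ex: "\<exists>v\<in>W. v \<noteq> (0,0,0,0)"
  shows "odd (card (W - {(0,0,0,0)}))"
proof -
  obtain z where z: "z \<in> W" "z \<noteq> (0,0,0,0)" using ex by blast
  have "even (card W)" using translate_even[OF ch _ z(2)] cl z(1) by simp
  moreover have "card (W - {(0,0,0,0)}) = card W - 1" using W0 by simp
  moreover have "card W \<ge> 1" using W0 by (metis One_nat_def Suc_leI card_gt_0_iff empty_iff finite)
  ultimately show ?thesis by (metis Suc_pred' diff_Suc_1 even_Suc not_one_le_zero zero_less_iff_neq_zero)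
qed

lemma pair_dir:
  assumes H1: "\<forall>v. sform v b = 0 \<and> sform v d = 0 \<longrightarrow> (\<exists>s r. v = v4_add (v4_smult s a) (v4_smult r (c::'a::field vec4)))"
    and li: "lin_indep2 u w" and ti: "\<forall>x\<in>span2 u w. \<forall>y\<in>span2 u w. sform x y = 0"
    and y: "y \<in> span2 u w" "y \<noteq> (0,0,0,0)" "sform y b = 0" "sform y d = 0"
  shows "\<exists>z\<in>span2 u w. z \<noteq> (0,0,0,0) \<and> sform z a = 0 \<and> sform z c = 0"
proof -
  obtain s r where sr: "y = v4_add (v4_smult s a) (v4_smult r c)" using H1 y(3,4) by blast
  show ?thesis
  proof (cases "r = 0")
    case True
    obtain z where z: "z \<in> span2 u w" "z \<noteq> (0,0,0,0)" "sform z c = 0" using kernel_elt[OF li] by blast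
    have "s \<noteq> 0"
    proof
      assume "s = 0"
      with True sr have "y = (0,0,0,0)"
        by (cases a rule: prod_cases4; cases c rule: prod_cases4) simp
      with y(2) show False by simp
    qed
    moreover have "sform z y = 0" using ti z(1) y(1) by blast
    ultimately have "sform z a = 0" using sr True by (simp add: sform_lin2)
    then show ?thesis using z by blast
  next
    case False
    obtain z where z: "z \<in> span2 u w" "z \<noteq> (0,0,0,0)" "sform z a = 0" using kernel_elt[OF li] by blast
    have "sform z y = 0" using ti z(1) y(1) by blast
    then have "sform z c = 0" using sr False z(3) by (simp add: sform_lin2)
    then show ?thesis using z by blast
  qed
qed

lemma pair_even:
  assumes ch: "(1::'a::{field,finite}) + 1 = 0"
    and H1: "\<forall>v. sform v b = 0 \<and> sform v d = 0 \<longrightarrow> (\<exists>s r. v = v4_add (v4_smult s a) (v4_smult r (c::'a vec4)))"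
    and H2: "\<forall>v. sform v a = 0 \<and> sform v c = 0 \<longrightarrow> (\<exists>s r. v = v4_add (v4_smult s b) (v4_smult r d))"
    and ac: "sform a c \<noteq> 0"
    and l: "l \<in> (Lines :: 'a vec4 set set)"
  shows "even (card {v. v \<in> l \<and> v \<noteq> (0,0,0,0) \<and> ((sform v b = 0 \<and> sform v d = 0) \<or> (sform v a = 0 \<and> sform v c = 0))})"
proof -
  obtain u w where uw: "lin_indep2 u w" "l = span2 u w" "\<forall>x\<in>l. \<forall>y\<in>l. sform x y = 0"
    using l unfolding Lines_def by blast
  define W1 where "W1 = {v. v \<in> l \<and> sform v b = 0 \<and> sform v d = 0}"
  define W2 where "W2 = {v. v \<in> l \<and> sform v a = 0 \<and> sform v c = 0}"
  have eq: "{v. v \<in> l \<and> v \<noteq> (0,0,0,0) \<and> ((sform v b = 0 \<and> sform v d = 0) \<or> (sform v a = 0 \<and> sform v c = 0))}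
      = (W1 - {(0,0,0,0)}) \<union> (W2 - {(0,0,0,0)})" unfolding W1_def W2_def by auto
  have disj: "(W1 - {(0,0,0,0)}) \<inter> (W2 - {(0,0,0,0)}) = {}"
  proof (rule ccontr)
    assume "(W1 - {(0,0,0,0)}) \<inter> (W2 - {(0,0,0,0)}) \<noteq> {}"
    then obtain v where v: "v \<in> W1" "v \<in> W2" "v \<noteq> (0,0,0,0)" by blast
    obtain s r where sr: "v = v4_add (v4_smult s a) (v4_smult r c)" using H1 v(1) unfolding W1_def by blast
    have "sform v a = 0" "sform v c = 0" using v(2) unfolding W2_def by auto
    then have "r * sform c a = 0" "s * sform a c = 0" using sr by (simp_all add: sform_lin1 sform_alt)
    moreover have "sform c a \<noteq> 0" using ac sform_skew[of c a] by simp
    ultimately have "r = 0" "s = 0" using ac by auto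
    then have "v = (0,0,0,0)" using sr by (cases a rule: prod_cases4; cases c rule: prod_cases4) simp
    with v(3) show False by simp
  qed
  have sub: "(0,0,0,0) \<in> W \<and> (\<forall>x\<in>W. \<forall>y\<in>W. v4_add x y \<in> W)" if "W = W1 \<or> W = W2" for W
  proof -
    have "(0,0,0,0) \<in> l" using uw(2) span2_zero by blast
    moreover have "\<forall>x\<in>l. \<forall>y\<in>l. v4_add x y \<in> l" using uw(2) span2_add by blast
    ultimately show ?thesis using that unfolding W1_def W2_def
      by (auto simp del: sform_simp v4_add_simp simp: sform_add1 sform_zero1)
  qed
  have ex: "(\<exists>v\<in>W1. v \<noteq> (0,0,0,0)) \<longleftrightarrow> (\<exists>v\<in>W2. v \<noteq> (0,0,0,0))"
  proof
    assume "\<exists>v\<in>W1. v \<noteq> (0,0,0,0)"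
    then obtain y where y: "y \<in> span2 u w" "y \<noteq> (0,0,0,0)" "sform y b = 0" "sform y d = 0"
      unfolding W1_def uw(2) by blast
    from pair_dir[OF H1 uw(1) uw(3)[unfolded uw(2)] y] show "\<exists>v\<in>W2. v \<noteq> (0,0,0,0)"
      unfolding W2_def uw(2) by blast
  next
    assume "\<exists>v\<in>W2. v \<noteq> (0,0,0,0)"
    then obtain y where y: "y \<in> span2 u w" "y \<noteq> (0,0,0,0)" "sform y a = 0" "sform y c = 0"
      unfolding W2_def uw(2) by blast
    from pair_dir[OF H2 uw(1) uw(3)[unfolded uw(2)] y] show "\<exists>v\<in>W1. v \<noteq> (0,0,0,0)"
      unfolding W1_def uw(2) by blast
  qed
  show ?thesis
  proof (cases "\<exists>v\<in>W1. v \<noteq> (0,0,0,0)")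
    case True
    have o1: "odd (card (W1 - {(0,0,0,0)}))" using sub_parity[OF ch _ _ True] sub[of W1] by blast
    have o2: "odd (card (W2 - {(0,0,0,0)}))" using sub_parity[OF ch _ _ True[unfolded ex]] sub[of W2] by blast
    show ?thesis unfolding eq using card_Un_disjoint[OF _ _ disj] o1 o2 by simp
  next
    case False
    then have "W1 - {(0,0,0,0)} = {}" "W2 - {(0,0,0,0)} = {}" using ex by auto
    then show ?thesis unfolding eq by (simp only: Un_empty card.empty) simp
  qed
qed



lemma f_P1:
  assumes "f \<in> (ker_restr_P1 :: ('a::field vec4 set \<Rightarrow> bit) set)" "v3 \<noteq> 0"
  shows "f (span1 (v0,v1,v2,v3)) = 0"
proof -
  have "span1 (v0,v1,v2,v3) \<in> Points1"
    unfolding Points1_def using span1_Points[of "(v0,v1,v2,v3)"] assms(2) by auto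
  then show ?thesis using assms(1) unfolding ker_restr_P1_def by blast
qed

lemma f_outside:
  assumes "f \<in> (code_PL :: ('a::field vec4 set \<Rightarrow> bit) set)" "p \<notin> Points"
  shows "f p = 0"
proof -
  have "f \<in> module.span fscale (chi ` (Lines :: 'a vec4 set set))" using assms(1) by (simp add: code_PL_def)
  then show ?thesis
  proof (rule module.span_induct_alt[OF fscale_mod])
    show "(0::'a vec4 set \<Rightarrow> bit) p = 0" by simp
  next
    fix c x and y :: "'a vec4 set \<Rightarrow> bit" assume "x \<in> chi ` (Lines :: 'a vec4 set set)" "y p = 0"
    then show "(fscale c x + y) p = 0" using assms(2) by (auto simp: fscale_def chi_def)
  qed
qed

lemma sum_scaled:
  assumes q: "odd (card (UNIV :: 'a::{field,finite} set) - 1)" and a: "a \<noteq> (0,0,0,0)"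
  shows "(\<Sum>v\<in>(\<lambda>s. v4_smult s a) ` (UNIV - {0::'a}). f (span1 v)) = (f (span1 a) :: bit)"
proof -
  have inj: "inj_on (\<lambda>s. v4_smult s a) (UNIV - {0::'a})"
  proof (rule inj_onI)
    fix s t :: 'a assume "v4_smult s a = v4_smult t a"
    then show "s = t" using a by (cases a rule: prod_cases4) auto
  qed
  have "(\<Sum>v\<in>(\<lambda>s. v4_smult s a) ` (UNIV - {0::'a}). f (span1 v)) = (\<Sum>s\<in>UNIV - {0::'a}. f (span1 a))"
    by (simp add: sum.reindex[OF inj] span1_scale)
  also have "\<dots> = of_nat (card (UNIV :: 'a set) - 1) * f (span1 a)"
    by (simp add: card_Diff_subset)
  also have "\<dots> = f (span1 a)" using q by (simp add: of_nat_bit)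
  finally show ?thesis .
qed

lemma sform_smult1: "sform (v4_smult s x) y = s * sform x (y::'a::field vec4)"
  by (cases x rule: prod_cases4; cases y rule: prod_cases4) (simp add: algebra_simps)

lemma smult_nz: "(s::'a::field) \<noteq> 0 \<Longrightarrow> x \<noteq> (0,0,0,0) \<Longrightarrow> v4_smult s x \<noteq> (0,0,0,0)"
  by (cases x rule: prod_cases4) auto

lemma cond_a_generic:
  fixes a0 a1 a2 b0 b1 b2 c0 c1 c2 d0 d1 d2 :: "'a::{field,finite}"
  defines "a \<equiv> (a0,a1,a2,0)" and "b \<equiv> (b0,b1,b2,0)" and "c \<equiv> (c0,c1,c2,1)" and "d \<equiv> (d0,d1,d2,1)"
  assumes ch: "(1::'a) + 1 = 0" and q: "odd (card (UNIV :: 'a set) - 1)"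
    and H1: "\<forall>v. sform v b = 0 \<and> sform v d = 0 \<longrightarrow> (\<exists>s r. v = v4_add (v4_smult s a) (v4_smult r c))"
    and H2: "\<forall>v. sform v a = 0 \<and> sform v c = 0 \<longrightarrow> (\<exists>s r. v = v4_add (v4_smult s b) (v4_smult r d))"
    and ac: "sform a c \<noteq> 0" and ab: "sform a b = 0" and ad: "sform a d = 0" and bc: "sform b c = 0"
    and a0: "a \<noteq> (0,0,0,0)" and b0: "b \<noteq> (0,0,0,0)"
    and f: "f \<in> ker_restr_P1 \<inter> code_PL"
  shows "f (span1 a) = f (span1 b)"
proof -
  define G where "G = (\<lambda>v. (sform v b = 0 \<and> sform v d = 0) \<or> (sform v a = 0 \<and> sform v c = 0))"
  have "dsum G f = 0"
    using dual[of G f] pair_even[OF ch H1 H2 ac] f unfolding G_def by blast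
  have S: "{v. v \<noteq> (0,0,0,0) \<and> G v \<and> snd (snd (snd v)) = 0}
      = (\<lambda>s. v4_smult s a) ` (UNIV - {0}) \<union> (\<lambda>s. v4_smult s b) ` (UNIV - {0})" (is "?L = ?R")
  proof
    show "?L \<subseteq> ?R"
    proof
      fix v assume v: "v \<in> ?L"
      show "v \<in> ?R"
      proof (cases "sform v b = 0 \<and> sform v d = 0")
        case True
        then obtain s r where sr: "v = v4_add (v4_smult s a) (v4_smult r c)" using H1 by blast
        then have "r = 0" using v unfolding a_def c_def by auto
        then have "v = v4_smult s a" "s \<noteq> 0" using sr v unfolding a_def c_def by auto
        then show ?thesis by blast
      next
        case False
        then have "sform v a = 0 \<and> sform v c = 0" using v G_def by auto
        then obtain s r where sr: "v = v4_add (v4_smult s b) (v4_smult r d)" using H2 by blast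
        then have "r = 0" using v unfolding b_def d_def by auto
        then have "v = v4_smult s b" "s \<noteq> 0" using sr v unfolding b_def d_def by auto
        then show ?thesis by blast
      qed
    qed
  next
    have "sform b a = - sform a b" by (rule sform_skew)
    then have ba: "sform b a = 0" using ab by simp
    show "?R \<subseteq> ?L"
    proof
      fix v assume "v \<in> ?R"
      then obtain s where s: "s \<noteq> 0" "v = v4_smult s a \<or> v = v4_smult s b" by blast
      have "v \<noteq> (0,0,0,0)" using smult_nz[OF s(1) a0] smult_nz[OF s(1) b0] s(2) by (elim disjE) simp_all
      moreover have "G v"
      proof (cases "v = v4_smult s a")
        case True
        have "sform v b = s * sform a b" "sform v d = s * sform a d" unfolding True by (rule sform_smult1)+
        then show ?thesis using ab ad unfolding G_def by simp
      next
        case False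
        then have v: "v = v4_smult s b" using s(2) by blast
        have "sform v a = s * sform b a" "sform v c = s * sform b c" unfolding v by (rule sform_smult1)+
        then show ?thesis using ba bc unfolding G_def by simp
      qed
      moreover have "snd (snd (snd v)) = 0" using s(2) unfolding a_def b_def by auto
      ultimately show "v \<in> ?L" by blast
    qed
  qed
  have disj: "(\<lambda>s. v4_smult s a) ` (UNIV - {0}) \<inter> (\<lambda>s. v4_smult s b) ` (UNIV - {0}) = {}"
  proof (rule ccontr)
    assume "\<not> ?thesis"
    then obtain s t where st: "s \<noteq> 0" "v4_smult s a = v4_smult t b" by blast
    have "sform (v4_smult s a) c = s * sform a c" "sform (v4_smult t b) c = t * sform b c"
      by (simp_all only: sform_smult1)
    then show False using st ac bc by simp
  qed
  have "dsum G f = (\<Sum>v\<in>{v. v \<noteq> (0,0,0,0) \<and> G v \<and> snd (snd (snd v)) = 0}. f (span1 v))"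
    unfolding dsum_def
  proof (rule sum.mono_neutral_right)
    show "\<forall>v\<in>{v. v \<noteq> (0,0,0,0) \<and> G v} - {v. v \<noteq> (0,0,0,0) \<and> G v \<and> snd (snd (snd v)) = 0}. f (span1 v) = 0"
    proof
      fix v assume "v \<in> {v. v \<noteq> (0,0,0,0) \<and> G v} - {v. v \<noteq> (0,0,0,0) \<and> G v \<and> snd (snd (snd v)) = 0}"
      then show "f (span1 v) = 0" using f f_P1[of f] by (cases v rule: prod_cases4) auto
    qed
  qed auto
  also have "\<dots> = f (span1 a) + f (span1 b)"
    unfolding S by (simp add: sum.union_disjoint[OF _ _ disj] sum_scaled[OF q a0] sum_scaled[OF q b0])
  finally have "f (span1 a) + f (span1 b) = 0" using \<open>dsum G f = 0\<close> by simp
  then show ?thesis by (cases "f (span1 a)"; cases "f (span1 b)") auto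
qed



lemma condA:
  fixes \<alpha> \<gamma> :: "'a::{field,finite}"
  assumes ch: "(1::'a) + 1 = 0" and q: "odd (card (UNIV :: 'a set) - 1)"
    and f: "f \<in> ker_restr_P1 \<inter> code_PL"
  shows "f (span1 (\<alpha>,1,\<gamma>,0)) = f (span1 (0,1,\<gamma>,0))"
proof (cases "\<alpha> = 0")
  case True then show ?thesis by simp
next
  case False
  show ?thesis
  proof (rule cond_a_generic[OF ch q _ _ _ _ _ _ _ _ f, where ?c0.0 = 0 and ?c1.0 = 0 and ?c2.0 = "-0"
        and ?d0.0 = 0 and ?d1.0 = 0 and ?d2.0 = "-\<alpha>"])
    show "\<forall>v. sform v (0, 1, \<gamma>, 0) = 0 \<and> sform v (0, 0, - \<alpha>, 1) = 0 \<longrightarrow>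
        (\<exists>s r. v = v4_add (v4_smult s (\<alpha>, 1, \<gamma>, 0)) (v4_smult r (0, 0, - 0, 1)))"
    proof (intro allI impI)
      fix v :: "'a vec4"
      assume h: "sform v (0, 1, \<gamma>, 0) = 0 \<and> sform v (0, 0, - \<alpha>, 1) = 0"
      obtain v0 v1 v2 v3 where v: "v = (v0,v1,v2,v3)" by (cases v rule: prod_cases4)
      have e1: "v2 = v1 * \<gamma>" "v0 = \<alpha> * v1" using h unfolding v by (simp_all add: algebra_simps)
      show "\<exists>s r. v = v4_add (v4_smult s (\<alpha>, 1, \<gamma>, 0)) (v4_smult r (0, 0, - 0, 1))"
        by (rule exI[of _ v1], rule exI[of _ v3]) (simp add: v e1 algebra_simps)
    qed
    show "\<forall>v. sform v (\<alpha>, 1, \<gamma>, 0) = 0 \<and> sform v (0, 0, - 0, 1) = 0 \<longrightarrow>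
        (\<exists>s r. v = v4_add (v4_smult s (0, 1, \<gamma>, 0)) (v4_smult r (0, 0, - \<alpha>, 1)))"
    proof (intro allI impI)
      fix v :: "'a vec4"
      assume h: "sform v (\<alpha>, 1, \<gamma>, 0) = 0 \<and> sform v (0, 0, - 0, 1) = 0"
      obtain v0 v1 v2 v3 where v: "v = (v0,v1,v2,v3)" by (cases v rule: prod_cases4)
      have e1: "v2 = v1 * \<gamma> - v3 * \<alpha>" "v0 = 0" using h unfolding v by (simp_all add: algebra_simps)
      show "\<exists>s r. v = v4_add (v4_smult s (0, 1, \<gamma>, 0)) (v4_smult r (0, 0, - \<alpha>, 1))"
        by (rule exI[of _ v1], rule exI[of _ v3]) (simp add: v e1 algebra_simps)
    qed
  qed (use False in \<open>simp_all add: algebra_simps\<close>)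
qed

lemma condB:
  fixes \<alpha> :: "'a::{field,finite}"
  assumes ch: "(1::'a) + 1 = 0" and q: "odd (card (UNIV :: 'a set) - 1)"
    and f: "f \<in> ker_restr_P1 \<inter> code_PL"
  shows "f (span1 (\<alpha>,0,1,0)) = f (span1 (0,0,1,0))"
proof (cases "\<alpha> = 0")
  case True then show ?thesis by simp
next
  case False
  show ?thesis
  proof (rule cond_a_generic[OF ch q _ _ _ _ _ _ _ _ f, where ?c0.0 = 0 and ?c1.0 = 0 and ?c2.0 = 0
        and ?d0.0 = 0 and ?d1.0 = \<alpha> and ?d2.0 = 0])
    show "\<forall>v. sform v (0, 0, 1, 0) = 0 \<and> sform v (0, \<alpha>, 0, 1) = 0 \<longrightarrow>
        (\<exists>s r. v = v4_add (v4_smult s (\<alpha>, 0, 1, 0)) (v4_smult r (0, 0, 0, 1)))"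
    proof (intro allI impI)
      fix v :: "'a vec4"
      assume h: "sform v (0, 0, 1, 0) = 0 \<and> sform v (0, \<alpha>, 0, 1) = 0"
      obtain v0 v1 v2 v3 where v: "v = (v0,v1,v2,v3)" by (cases v rule: prod_cases4)
      have e1: "v1 = 0" "v0 = v2 * \<alpha>" using h unfolding v by (simp_all add: algebra_simps)
      show "\<exists>s r. v = v4_add (v4_smult s (\<alpha>, 0, 1, 0)) (v4_smult r (0, 0, 0, 1))"
        by (rule exI[of _ v2], rule exI[of _ v3]) (simp add: v e1 algebra_simps)
    qed
    show "\<forall>v. sform v (\<alpha>, 0, 1, 0) = 0 \<and> sform v (0, 0, 0, 1) = 0 \<longrightarrow>
        (\<exists>s r. v = v4_add (v4_smult s (0, 0, 1, 0)) (v4_smult r (0, \<alpha>, 0, 1)))"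
    proof (intro allI impI)
      fix v :: "'a vec4"
      assume h: "sform v (\<alpha>, 0, 1, 0) = 0 \<and> sform v (0, 0, 0, 1) = 0"
      obtain v0 v1 v2 v3 where v: "v = (v0,v1,v2,v3)" by (cases v rule: prod_cases4)
      have e1: "v1 = v3 * \<alpha>" "v0 = 0" using h unfolding v by (simp_all add: algebra_simps)
      show "\<exists>s r. v = v4_add (v4_smult s (0, 0, 1, 0)) (v4_smult r (0, \<alpha>, 0, 1))"
        by (rule exI[of _ v2], rule exI[of _ v3]) (simp add: v e1 algebra_simps)
    qed
  qed (use False in \<open>simp_all add: algebra_simps\<close>)
qed



definition mline :: "'a::field option \<Rightarrow> 'a vec4 set" where
  "mline i = (case i of Some \<gamma> \<Rightarrow> span2 (1,0,0,0) (0,1,\<gamma>,0) | None \<Rightarrow> span2 (1,0,0,0) (0,0,1,0))"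

definition pv :: "'a::field option \<Rightarrow> 'a vec4" where
  "pv i = (case i of Some \<gamma> \<Rightarrow> (0,1,\<gamma>,0) | None \<Rightarrow> (0,0,1,0))"

definition idx :: "'a::field \<Rightarrow> 'a \<Rightarrow> 'a option" where
  "idx x y = (if x \<noteq> 0 then Some (y / x) else None)"

lemma mem_mline_Some: "(v0,v1,v2,v3) \<in> mline (Some \<gamma>) \<longleftrightarrow> v3 = 0 \<and> v2 = \<gamma> * (v1::'a::field)"
  by (auto simp: mline_def span2_mem mult.commute)

lemma mem_mline_None: "(v0,v1,v2,v3) \<in> mline None \<longleftrightarrow> v3 = 0 \<and> (v1::'a::field) = 0"
  by (auto simp: mline_def span2_mem)

lemma mline_Lines: "mline i \<in> (Lines :: 'a::field vec4 set set)"
proof -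
  obtain u w :: "'a vec4" where uw: "mline i = span2 u w" "u = (1,0,0,0)" "snd (snd (snd w)) = 0"
    "fst w = 0" "w \<noteq> (0,0,0,0)"
    by (cases i) (auto simp: mline_def)
  have li: "lin_indep2 u w" unfolding lin_indep2_def uw(2)
    using uw(3-5) by (cases w rule: prod_cases4) auto
  have ti: "\<forall>x\<in>span2 u w. \<forall>y\<in>span2 u w. sform x y = 0"
    unfolding uw(2) using uw(3,4)
    by (cases w rule: prod_cases4) (auto simp: span2_mem algebra_simps)
  show ?thesis unfolding Lines_def using li ti uw(1) by blast
qed

lemma mem_idx:
  assumes "(v1,v2) \<noteq> (0,0)"
  shows "(v0,v1,v2,0) \<in> mline i \<longleftrightarrow> i = idx v1 (v2::'a::field)"
proof (cases i)
  case None then show ?thesis using assms by (auto simp: mem_mline_None idx_def)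
next
  case (Some \<gamma>) then show ?thesis using assms by (auto simp: mem_mline_Some idx_def field_simps)
qed

lemma claimF:
  fixes v0 v1 v2 :: "'a::{field,finite}"
  assumes ch: "(1::'a) + 1 = 0" and q: "odd (card (UNIV :: 'a set) - 1)"
    and f: "f \<in> ker_restr_P1 \<inter> code_PL" and nz: "(v1,v2) \<noteq> (0,0)"
  shows "f (span1 (v0,v1,v2,0)) = f (span1 (pv (idx v1 v2)))"
proof (cases "v1 = 0")
  case False
  have "span1 (v0,v1,v2,0) = span1 (v4_smult (inverse v1) (v0,v1,v2,0))"
    by (rule span1_scale[symmetric]) (simp add: False)
  also have "\<dots> = span1 (v0/v1, 1, v2/v1, 0)" using False by (simp add: divide_inverse mult.commute)
  finally show ?thesis using condA[OF ch q f, of "v0/v1" "v2/v1"] False by (simp add: pv_def idx_def)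
next
  case True
  then have v2: "v2 \<noteq> 0" using nz by simp
  have "span1 (v0,v1,v2,0) = span1 (v4_smult (inverse v2) (v0,v1,v2,0))"
    by (rule span1_scale[symmetric]) (simp add: v2)
  also have "\<dots> = span1 (v0/v2, 0, 1, 0)" using v2 True by (simp add: divide_inverse mult.commute)
  finally show ?thesis using condB[OF ch q f, of "v0/v2"] True by (simp add: pv_def idx_def)
qed



lemma fiber_card:
  fixes i :: "'a::{field,finite} option"
  shows "card {p \<in> UNIV - {(0,0)}. (case p of (x,y) \<Rightarrow> idx x y) = i} = card (UNIV :: 'a::{field,finite} set) - 1"
proof (cases i)
  case None
  have "{p \<in> UNIV - {(0,0)}. (case p of (x,y) \<Rightarrow> idx x y) = i} = (\<lambda>y. (0::'a, y)) ` (UNIV - {0::'a})"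
    using None by (auto simp: idx_def split: if_splits)
  moreover have "inj_on (\<lambda>y. (0::'a, y)) (UNIV - {0::'a})" by (auto simp: inj_on_def)
  ultimately show ?thesis by (simp add: card_image card_Diff_subset)
next
  case (Some \<gamma>)
  have "{p \<in> UNIV - {(0,0)}. (case p of (x,y) \<Rightarrow> idx x y) = i} = (\<lambda>x. (x, \<gamma> * x)) ` (UNIV - {0::'a})"
    using Some by (auto simp: idx_def split: if_splits simp: field_simps image_iff)
  moreover have "inj_on (\<lambda>x. (x, \<gamma> * x)) (UNIV - {0::'a})" by (auto simp: inj_on_def)
  ultimately show ?thesis by (simp add: card_image card_Diff_subset)
qed

lemma cond_b:
  fixes f :: "'a::{field,finite} vec4 set \<Rightarrow> bit"
  assumes ch: "(1::'a) + 1 = 0" and q: "odd (card (UNIV :: 'a set) - 1)"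
    and f: "f \<in> ker_restr_P1 \<inter> code_PL"
  shows "f (span1 (1,0,0,0)) = (\<Sum>i\<in>UNIV. f (span1 (pv i)))"
proof -
  define h where "h = (\<lambda>i. f (span1 (pv i)))"
  define \<psi> where "\<psi> = (\<lambda>p. case p of (x,y) \<Rightarrow> if (x,y) = (0::'a,0::'a) then f (span1 (1,0,0,0)) else h (idx x y))"
  have d0: "dsum (\<lambda>v. fst v \<noteq> 0) f = 0"
    using dual[of "\<lambda>v. fst v \<noteq> 0" f] G1_even[OF ch] f by blast
  define S where "S = {v::'a vec4. fst v \<noteq> 0 \<and> snd (snd (snd v)) = 0}"
  have "dsum (\<lambda>v. fst v \<noteq> 0) f = (\<Sum>v\<in>S. f (span1 v))"
    unfolding dsum_def
  proof (rule sum.mono_neutral_right)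
    show "\<forall>v\<in>{v. v \<noteq> (0,0,0,0) \<and> fst v \<noteq> 0} - S. f (span1 v) = 0"
    proof
      fix v assume "v \<in> {v. v \<noteq> (0,0,0,0) \<and> fst v \<noteq> (0::'a)} - S"
      then show "f (span1 v) = 0" using f f_P1[of f] unfolding S_def by (cases v rule: prod_cases4) auto
    qed
  qed (auto simp: S_def)
  also have "\<dots> = (\<Sum>p\<in>(UNIV - {0::'a}) \<times> (UNIV :: ('a \<times> 'a) set). f (span1 (fst p, fst (snd p), snd (snd p), 0)))"
  proof -
    have "S = (\<lambda>p. (fst p, fst (snd p), snd (snd p), 0)) ` ((UNIV - {0::'a}) \<times> (UNIV :: ('a \<times> 'a) set))"
      unfolding S_def by (auto simp: image_iff)
    moreover have "inj_on (\<lambda>p. (fst p, fst (snd p), snd (snd p), 0::'a)) ((UNIV - {0::'a}) \<times> (UNIV :: ('a \<times> 'a) set))"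
      by (auto simp: inj_on_def prod_eq_iff)
    ultimately show ?thesis by (simp add: sum.reindex)
  qed
  also have "\<dots> = (\<Sum>p\<in>(UNIV - {0::'a}) \<times> (UNIV :: ('a \<times> 'a) set). \<psi> (snd p))"
  proof (rule sum.cong[OF refl])
    fix p :: "'a \<times> 'a \<times> 'a" assume p: "p \<in> (UNIV - {0::'a}) \<times> UNIV"
    obtain a x y where pe: "p = (a, x, y)" by (cases p) auto
    have a: "a \<noteq> 0" using p pe by auto
    show "f (span1 (fst p, fst (snd p), snd (snd p), 0)) = \<psi> (snd p)"
    proof (cases "(x,y) = (0,0)")
      case True
      have "span1 (a,0,0,0) = span1 (v4_smult a (1,0,0,0))" by simp
      also have "\<dots> = span1 (1,0,0,0)" by (rule span1_scale[OF a])
      finally show ?thesis using True unfolding pe \<psi>_def by simp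
    next
      case False
      have "\<psi> (x,y) = h (idx x y)" using False unfolding \<psi>_def by auto
      then show ?thesis using claimF[OF ch q f False, of a] unfolding pe h_def by simp
    qed
  qed
  also have "\<dots> = (\<Sum>a\<in>UNIV - {0::'a}. \<Sum>p\<in>(UNIV :: ('a \<times> 'a) set). \<psi> p)"
    by (simp only: sum.cartesian_product case_prod_unfold)
  also have "\<dots> = of_nat (card (UNIV - {0::'a})) * (\<Sum>p\<in>(UNIV :: ('a \<times> 'a) set). \<psi> p)"
    by (rule sum_constant)
  also have "of_nat (card (UNIV - {0::'a})) = (1::bit)" using q by (simp add: card_Diff_subset of_nat_bit)
  also have "1 * (\<Sum>p\<in>(UNIV :: ('a \<times> 'a) set). \<psi> p) = (\<Sum>p\<in>(UNIV :: ('a \<times> 'a) set). \<psi> p)"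
    by (rule mult_1_left)
  also have "\<dots> = \<psi> (0,0) + (\<Sum>p\<in>UNIV - {(0,0)}. \<psi> p)"
    by (rule sum.remove) auto
  also have "(\<Sum>p\<in>UNIV - {(0::'a,0::'a)}. \<psi> p) = (\<Sum>p\<in>UNIV - {(0::'a,0::'a)}. h (case p of (x,y) \<Rightarrow> idx x y))"
    by (rule sum.cong) (auto simp: \<psi>_def split: if_splits)
  also have "\<dots> = (\<Sum>i\<in>UNIV. \<Sum>p\<in>{p \<in> UNIV - {(0::'a,0::'a)}. (case p of (x,y) \<Rightarrow> idx x y) = i}. h (case p of (x,y) \<Rightarrow> idx x y))"
    by (rule sum.group[symmetric]) auto
  also have "\<dots> = (\<Sum>i\<in>UNIV. h i)"
  proof (rule sum.cong[OF refl])
    fix i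
    have "(\<Sum>p\<in>{p \<in> UNIV - {(0::'a,0::'a)}. (case p of (x,y) \<Rightarrow> idx x y) = i}. h (case p of (x,y) \<Rightarrow> idx x y))
        = (\<Sum>p\<in>{p \<in> UNIV - {(0::'a,0::'a)}. (case p of (x,y) \<Rightarrow> idx x y) = i}. h i)"
      by (rule sum.cong) auto
    also have "\<dots> = of_nat (card {p \<in> UNIV - {(0::'a,0::'a)}. (case p of (x,y) \<Rightarrow> idx x y) = i}) * h i"
      by (rule sum_constant)
    also have "of_nat (card {p \<in> UNIV - {(0::'a,0::'a)}. (case p of (x,y) \<Rightarrow> idx x y) = i}) = (1::bit)"
      using q by (simp only: fiber_card of_nat_bit) simp
    also have "1 * h i = h i" by (rule mult_1_left)
    finally show "(\<Sum>p\<in>{p \<in> UNIV - {(0::'a,0::'a)}. (case p of (x,y) \<Rightarrow> idx x y) = i}. h (case p of (x,y) \<Rightarrow> idx x y)) = h i" .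
  qed
  finally have "\<psi> (0,0) + (\<Sum>i\<in>UNIV. h i) = 0" using d0 by simp
  then have "f (span1 (1,0,0,0)) + (\<Sum>i\<in>UNIV. h i) = 0" by (simp add: \<psi>_def)
  then show ?thesis unfolding h_def by (cases "f (span1 (1,0,0,0))"; cases "\<Sum>i\<in>UNIV. f (span1 (pv i))") auto
qed



lemma chi_mline: "v \<noteq> (0,0,0,0) \<Longrightarrow> chi (mline j) (span1 v) = (if v \<in> mline j then 1 else 0)"
  by (cases j) (simp_all add: mline_def chi_span2)

lemma pv_nz: "pv i \<noteq> ((0,0,0,0) :: 'a::field vec4)"
  by (cases i) (simp_all add: pv_def)

lemma pv_mem: "pv i \<in> mline j \<longleftrightarrow> j = (i :: 'a::field option)"
  by (cases i; cases j) (auto simp: pv_def mem_mline_Some mem_mline_None)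

lemma chi_pv: "chi (mline j) (span1 (pv i)) = (if j = (i :: 'a::field option) then 1 else 0)"
  by (simp add: chi_mline[OF pv_nz] pv_mem)

lemma chi_mline_inj: "inj (\<lambda>i. chi (mline (i :: 'a::field option)))"
proof (rule injI)
  fix i j :: "'a option" assume "chi (mline i) = chi (mline j)"
  then have "chi (mline i) (span1 (pv i)) = chi (mline j) (span1 (pv i))" by simp
  then show "i = j" by (simp add: chi_pv split: if_splits)
qed

lemma chi_mline_ker: "chi (mline i) \<in> (ker_restr_P1 :: ('a::field vec4 set \<Rightarrow> bit) set)"
  unfolding ker_restr_P1_def
proof (intro CollectI ballI)
  fix p :: "'a vec4 set" assume "p \<in> Points1"
  then obtain a b c d where p: "d \<noteq> 0" "p = span1 (a,b,c,d)" unfolding Points1_def by blast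
  have "(a,b,c,d) \<notin> mline i" using p(1) by (cases i) (simp_all add: mem_mline_Some mem_mline_None)
  then show "chi (mline i) p = 0" using p by (simp add: chi_mline)
qed

lemma indep_B: "\<not> module.dependent fscale (range (\<lambda>i. chi (mline (i :: 'a::field option))))"
proof
  assume "module.dependent fscale (range (\<lambda>i. chi (mline (i :: 'a option))))"
  then obtain i where i: "chi (mline i) \<in> module.span fscale (range (\<lambda>i. chi (mline (i :: 'a option))) - {chi (mline i)})"
    unfolding vector_space.dependent_def[OF fscale_vs] by blast
  have "h (span1 (pv i)) = 0" if "h \<in> module.span fscale (range (\<lambda>i. chi (mline (i :: 'a option))) - {chi (mline i)})" for h
    using that
  proof (rule module.span_induct_alt[OF fscale_mod])
    show "(0 :: 'a vec4 set \<Rightarrow> bit) (span1 (pv i)) = 0" by simp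
  next
    fix c x and y :: "'a vec4 set \<Rightarrow> bit"
    assume x: "x \<in> range (\<lambda>i. chi (mline (i :: 'a option))) - {chi (mline i)}" and y: "y (span1 (pv i)) = 0"
    then obtain j where j: "x = chi (mline j)" "j \<noteq> i" by auto
    show "(fscale c x + y) (span1 (pv i)) = 0" using y j by (simp add: fscale_def chi_pv)
  qed
  from this[OF i] show False by (simp add: chi_pv)
qed

lemma spanB_sub: "module.span fscale (range (\<lambda>i. chi (mline (i :: 'a::field option)))) \<subseteq> ker_restr_P1 \<inter> code_PL"
proof
  fix f assume "f \<in> module.span fscale (range (\<lambda>i. chi (mline (i :: 'a option))))"
  then show "f \<in> ker_restr_P1 \<inter> code_PL"
  proof (rule module.span_induct_alt[OF fscale_mod])
    show "(0 :: 'a vec4 set \<Rightarrow> bit) \<in> ker_restr_P1 \<inter> code_PL"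
      by (simp add: ker_restr_P1_def code_PL_def module.span_zero[OF fscale_mod])
  next
    fix c x and y :: "'a vec4 set \<Rightarrow> bit"
    assume x: "x \<in> range (\<lambda>i. chi (mline (i :: 'a option)))" and y: "y \<in> ker_restr_P1 \<inter> code_PL"
    then obtain j where j: "x = chi (mline j)" by auto
    have "x \<in> ker_restr_P1" using j chi_mline_ker by simp
    then have "fscale c x + y \<in> ker_restr_P1" using y by (simp add: ker_restr_P1_def fscale_def)
    moreover have "x \<in> code_PL" unfolding code_PL_def j
      by (rule module.span_base[OF fscale_mod]) (simp add: mline_Lines)
    then have "fscale c x + y \<in> code_PL" using y unfolding code_PL_def
      by (intro module.span_add[OF fscale_mod] module.span_scale[OF fscale_mod]) auto
    ultimately show "fscale c x + y \<in> ker_restr_P1 \<inter> code_PL" by blast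
  qed
qed

lemma K_sub:
  fixes f :: "'a::{field,finite} vec4 set \<Rightarrow> bit"
  assumes ch: "(1::'a) + 1 = 0" and q: "odd (card (UNIV :: 'a set) - 1)"
    and f: "f \<in> ker_restr_P1 \<inter> code_PL"
  shows "f \<in> module.span fscale (range (\<lambda>i. chi (mline (i :: 'a option))))"
proof -
  define val where "val i = f (span1 (pv i))" for i :: "'a option"
  define g where "g = (\<Sum>i\<in>UNIV. fscale (val i) (chi (mline i)))"
  have g_span: "g \<in> module.span fscale (range (\<lambda>i. chi (mline (i :: 'a option))))"
    unfolding g_def
    by (intro module.span_sum[OF fscale_mod] module.span_scale[OF fscale_mod] module.span_base[OF fscale_mod]) auto
  have gp: "g p = (\<Sum>i\<in>UNIV. val i * chi (mline i) p)" for p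
    unfolding g_def sum_fun_apply by (simp add: fscale_def)
  have "f = g"
  proof
    fix p
    show "f p = g p"
    proof (cases "p \<in> Points")
      case False
      then show ?thesis using f_outside[of f p] f by (simp add: gp chi_def)
    next
      case True
      then obtain v where v: "p = span1 v" "v \<noteq> (0,0,0,0)" unfolding Points_def by blast
      obtain v0 v1 v2 v3 where ve: "v = (v0,v1,v2,v3)" by (cases v rule: prod_cases4)
      have p: "p = span1 (v0,v1,v2,v3)" "(v0,v1,v2,v3) \<noteq> (0,0,0,0)" using v ve by auto
      have gv: "g p = (\<Sum>i\<in>UNIV. val i * (if (v0,v1,v2,v3) \<in> mline i then 1 else 0))"
        unfolding gp p(1) using chi_mline[OF p(2)] by simp
      show ?thesis
      proof (cases "v3 = 0")
        case False
        have nm: "(v0,v1,v2,v3) \<notin> mline i" for i using False by (cases i) (simp_all add: mem_mline_Some mem_mline_None)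
        have "f p = 0" using f_P1[of f v3 v0 v1 v2] f False p(1) by simp
        then show ?thesis using nm by (simp add: gv)
      next
        case v3: True
        show ?thesis
        proof (cases "(v1,v2) = (0,0)")
          case False
          have "g p = (\<Sum>i\<in>UNIV. if i = idx v1 v2 then val i else 0)"
            unfolding gv v3 using mem_idx[OF False, of v0] by (intro sum.cong refl) simp
          also have "\<dots> = val (idx v1 v2)" by simp
          also have "\<dots> = f p" unfolding val_def p(1) v3 using claimF[OF ch q f False] by simp
          finally show ?thesis by simp
        next
          case True
          then have v0: "v0 \<noteq> 0" using p(2) v3 by simp
          have mm: "(v0,v1,v2,v3) \<in> mline i" for i using True v3 by (cases i) (simp_all add: mem_mline_Some mem_mline_None)
          have "g p = (\<Sum>i\<in>UNIV. val i)" unfolding gv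
            by (intro sum.cong refl) (simp only: mm if_True mult_1_right)
          also have "\<dots> = f (span1 (1,0,0,0))" unfolding val_def using cond_b[OF ch q f] by simp
          also have "span1 (1,0,0,0) = span1 (v4_smult v0 (1,0,0,0))" by (rule span1_scale[symmetric, OF v0])
          also have "\<dots> = p" using p(1) True v3 by simp
          finally show ?thesis by simp
        qed
      qed
    qed
  qed
  then show ?thesis using g_span by simp
qed

theorem corollary12:
  fixes t :: nat
  assumes "card (UNIV :: 'a::{field,finite} set) = 2 ^ t"
  shows "vector_space.dim fscale (ker_restr_P1 \<inter> code_PL :: ('a vec4 set \<Rightarrow> bit) set)
           = 2 ^ t + 1"
proof -
  have ch: "(1::'a) + 1 = 0" by (rule char2[OF assms])
  have q: "odd (card (UNIV :: 'a set) - 1)" by (rule card_q_facts(2)[OF assms])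
  let ?B = "range (\<lambda>i. chi (mline (i :: 'a option))) :: ('a vec4 set \<Rightarrow> bit) set"
  have K: "(ker_restr_P1 \<inter> code_PL :: ('a vec4 set \<Rightarrow> bit) set) = module.span fscale ?B"
    using spanB_sub K_sub[OF ch q] by blast
  have "vector_space.dim fscale (module.span fscale ?B) = card ?B"
    by (rule vector_space.dim_span_eq_card_independent[OF fscale_vs indep_B])
  also have "card ?B = card (UNIV :: 'a option set)"
    by (rule card_image[OF inj_on_subset[OF chi_mline_inj subset_UNIV]])
  also have "\<dots> = 2 ^ t + 1" using assms by simp
  finally show ?thesis unfolding K .
qed

end
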